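(* Let $X=\{X_t\}_{t\ge0}$ be a continuous-time random walk on $\mathbb{Z}^d$ started at the origin, and let $\bm{p}_t(w)=\mathrm{P}\{X_t=w\}$ for $t\ge0$, $w\in\mathbb{Z}^d$. Then for all $t,s\ge0$ and $x,z\in\mathbb{Z}^d$, \[\sum_{y\in\mathbb{Z}^d}[\bm{p}_t(x-y)\bm{p}_s(y-z)]^2\le[\bm{p}_{t+s}(x-z)]^2.\] *)

theory Defs
  imports "HOL-Analysis.Analysis" "HOL-Probability.Probability"
begin

text \<open>Law of the number of jumps up to time t of a Poisson clock of rate lam:
  Poisson(lam*t), with Poisson(0) the point mass at 0.\<close>
definition jump_count_law :: "real \<Rightarrow> real \<Rightarrow> nat pmf" where
  "jump_count_law lam t = (if 0 < lam * t then poisson_pmf (lam * t) else return_pmf 0)"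

fun jump_sum_law :: "('a::{zero,plus}) pmf \<Rightarrow> nat \<Rightarrow> 'a pmf" where
  "jump_sum_law mu 0 = return_pmf 0"
| "jump_sum_law mu (Suc n) = map_pmf (\<lambda>(a, b). a + b) (pair_pmf mu (jump_sum_law mu n))"

text \<open>Law of X_t for the continuous-time random walk on Z^d started at the origin,
  with jump rate lam and jump distribution mu: X_t = xi_1 + ... + xi_{N_t}.\<close>
definition crw_law :: "real \<Rightarrow> (int ^ 'd) pmf \<Rightarrow> real \<Rightarrow> (int ^ 'd) pmf" where
  "crw_law lam mu t = bind_pmf (jump_count_law lam t) (jump_sum_law mu)"

definition crw_p :: "real \<Rightarrow> (int ^ 'd) pmf \<Rightarrow> real \<Rightarrow> int ^ 'd \<Rightarrow> real" where
  "crw_p lam mu t w = pmf (crw_law lam mu t) w"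

end

theory Submission imports Defs begin

lemma jcl_pmf:
  assumes "0 < lam" "0 \<le> t"
  shows "pmf (jump_count_law lam t) n = (lam*t)^n / fact n * exp(-(lam*t))"
proof (cases "t = 0")
  case True then show ?thesis by (cases n) (auto simp: jump_count_law_def indicator_def)
next
  case False
  then have "0 < lam * t" using assms by simp
  then show ?thesis by (simp add: jump_count_law_def)
qed

lemma poisson_conv:
  fixes a b :: real
  shows "(\<Sum>i\<le>k. a^i / fact i * exp(-a) * (b^(k-i) / fact (k-i) * exp(-b)))
      = (a+b)^k / fact k * exp(-(a+b))"
proof -
  have "(a+b)^k / fact k = (\<Sum>i\<le>k. of_nat (k choose i) * a^i * b^(k-i)) / fact k"
    by (simp add: binomial_ring)
  also have "\<dots> = (\<Sum>i\<le>k. a^i / fact i * (b^(k-i) / fact (k-i)))"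
    unfolding sum_divide_distrib
    by (rule sum.cong) (auto simp: binomial_fact field_simps)
  finally have "(a+b)^k / fact k * exp(-(a+b)) = (\<Sum>i\<le>k. a^i / fact i * (b^(k-i) / fact (k-i))) * (exp (-a) * exp(-b))"
    by (simp add: exp_add[symmetric])
  also have "\<dots> = (\<Sum>i\<le>k. a^i / fact i * exp(-a) * (b^(k-i) / fact (k-i) * exp(-b)))"
    unfolding sum_distrib_right by (rule sum.cong) auto
  finally show ?thesis by simp
qed

lemma jcl_add:
  assumes "0 < lam" "0 \<le> t" "0 \<le> s"
  shows "jump_count_law lam (t+s) = map_pmf (\<lambda>(m,n). m+n) (pair_pmf (jump_count_law lam t) (jump_count_law lam s))"
proof (rule pmf_eqI)
  fix k :: nat
  have pre: "(\<lambda>(m,n). m+n) -` {k} = (\<lambda>i. (i, k-i)) ` {..k}"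
    by (auto simp: image_iff) 
  have inj: "inj_on (\<lambda>i. (i, k-i)) {..k}" by (auto simp: inj_on_def)
  have "pmf (map_pmf (\<lambda>(m,n). m+n) (pair_pmf (jump_count_law lam t) (jump_count_law lam s))) k
     = (\<Sum>i\<le>k. pmf (jump_count_law lam t) i * pmf (jump_count_law lam s) (k-i))"
    unfolding pmf_map pre
    by (subst measure_measure_pmf_finite) (auto simp: sum.reindex[OF inj] pmf_pair)
  also have "\<dots> = pmf (jump_count_law lam (t+s)) k"
    using assms poisson_conv[where a="lam * t" and b="lam * s" and k=k]
    by (simp add: jcl_pmf distrib_left)
  finally show "pmf (jump_count_law lam (t+s)) k = pmf (map_pmf (\<lambda>(m,n). m+n) (pair_pmf (jump_count_law lam t) (jump_count_law lam s))) k" by simp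
qed

lemma jsl_add:
  fixes mu :: "('a::comm_monoid_add) pmf"
  shows "jump_sum_law mu (m+n) = map_pmf (\<lambda>(a,b). a+b) (pair_pmf (jump_sum_law mu m) (jump_sum_law mu n))"
proof (induction m)
  case 0
  then show ?case by (simp add: pair_return_pmf1 pmf.map_comp o_def)
next
  case (Suc m)
  show ?case
    by (simp add: Suc pair_pmf_def map_pmf_def bind_assoc_pmf bind_return_pmf add.assoc)
qed

lemma crw_add:
  assumes "0 < lam" "0 \<le> t" "0 \<le> s"
  shows "crw_law lam mu (t+s) = map_pmf (\<lambda>(a,b). a+b) (pair_pmf (crw_law lam mu t) (crw_law lam mu s))"
proof -
  let ?N = "jump_count_law lam" and ?J = "jump_sum_law mu"
  have "crw_law lam mu (t+s) = bind_pmf (?N t) (\<lambda>m. bind_pmf (?N s) (\<lambda>n. bind_pmf (?J m) (\<lambda>a. bind_pmf (?J n) (\<lambda>b. return_pmf (a+b)))))"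
    unfolding crw_law_def jcl_add[OF assms] bind_map_pmf
    by (simp add: pair_pmf_def bind_assoc_pmf bind_return_pmf jsl_add map_pmf_def)
  also have "\<dots> = bind_pmf (?N t) (\<lambda>m. bind_pmf (?J m) (\<lambda>a. bind_pmf (?N s) (\<lambda>n. bind_pmf (?J n) (\<lambda>b. return_pmf (a+b)))))"
    by (subst bind_commute_pmf) (rule refl)
  also have "\<dots> = map_pmf (\<lambda>(a,b). a+b) (pair_pmf (crw_law lam mu t) (crw_law lam mu s))"
    unfolding crw_law_def
    by (simp add: pair_pmf_def bind_assoc_pmf bind_return_pmf map_pmf_def)
  finally show ?thesis .
qed

lemma pair_sum_has_sum:
  fixes A B :: "('a::ab_group_add) pmf"
  shows "((\<lambda>y. pmf A (x - y) * pmf B (y - z)) has_sum pmf (map_pmf (\<lambda>(a,b). a+b) (pair_pmf A B)) (x - z)) UNIV"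
proof -
  let ?h = "\<lambda>y. (x - y, y - z)"
  have pre: "(\<lambda>(a,b). a+b) -` {x - z} = ?h ` UNIV"
  proof (auto simp: image_iff)
    fix a b assume "a + b = x - z"
    then show "\<exists>y. a = x - y \<and> b = y - z" by (intro exI[of _ "x - a"]) (auto simp: algebra_simps)
  qed
  have inj: "inj ?h" by (auto simp: inj_on_def)
  have as: "Infinite_Sum.abs_summable_on (pmf (pair_pmf A B)) (?h ` UNIV)"
    using abs_summable_equivalent pmf_abs_summable by blast
  then have sm: "pmf (pair_pmf A B) summable_on (?h ` UNIV)"
    by (rule abs_summable_summable)
  have "pmf (map_pmf (\<lambda>(a,b). a+b) (pair_pmf A B)) (x - z) = infsum (pmf (pair_pmf A B)) (?h ` UNIV)"
    unfolding pmf_map pre measure_pmf_conv_infsetsum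
    using infsetsum_infsum pmf_abs_summable by blast
  also have "\<dots> = infsum (\<lambda>y. pmf A (x - y) * pmf B (y - z)) UNIV"
    by (simp add: infsum_reindex[OF inj] o_def pmf_pair)
  finally have eq: "pmf (map_pmf (\<lambda>(a,b). a+b) (pair_pmf A B)) (x - z) = infsum (\<lambda>y. pmf A (x - y) * pmf B (y - z)) UNIV" .
  have "(\<lambda>y. pmf A (x - y) * pmf B (y - z)) summable_on UNIV"
    using sm unfolding summable_on_reindex[OF inj] by (simp add: o_def pmf_pair)
  then show ?thesis unfolding eq by (rule has_sum_infsum)
qed

theorem lemma3p3:
  fixes lam :: real and mu :: "(int ^ 'd::finite) pmf"
    and t s :: real and x z :: "int ^ 'd"
  assumes "0 < lam" and "0 \<le> t" and "0 \<le> s"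
  shows "(\<lambda>y. (crw_p lam mu t (x - y) * crw_p lam mu s (y - z))^2) summable_on UNIV
       \<and> (\<Sum>\<^sub>\<infinity>y. (crw_p lam mu t (x - y) * crw_p lam mu s (y - z))^2)
           \<le> (crw_p lam mu (t + s) (x - z))^2"
proof -
  define f where "f y = crw_p lam mu t (x - y) * crw_p lam mu s (y - z)" for y
  define S where "S = crw_p lam mu (t + s) (x - z)"
  have hs: "(f has_sum S) UNIV"
    unfolding f_def S_def crw_p_def crw_add[OF assms] by (rule pair_sum_has_sum)
  have sf: "f summable_on UNIV" using hs by (rule has_sum_imp_summable)
  have iS: "infsum f UNIV = S" using hs by (rule infsumI)
  have f0: "0 \<le> f y" for y by (simp add: f_def crw_p_def)
  have fS: "f y \<le> S" for y
  proof -
    have "infsum f {y} \<le> infsum f UNIV"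
      by (rule infsum_mono_neutral) (auto simp: sf f0)
    then show ?thesis by (simp add: iS)
  qed
  have le: "(f y)^2 \<le> f y * S" for y
    using fS[of y] f0[of y] by (simp add: power2_eq_square mult_left_mono)
  have s2: "(\<lambda>y. f y * S) summable_on UNIV" using sf by (rule summable_on_cmult_left)
  have sq: "(\<lambda>y. (f y)^2) summable_on UNIV"
    by (rule summable_on_comparison_test[OF s2]) (auto simp: le)
  have "infsum (\<lambda>y. (f y)^2) UNIV \<le> infsum (\<lambda>y. f y * S) UNIV"
    by (rule infsum_mono[OF sq s2]) (simp add: le)
  also have "\<dots> = S * S" using infsum_cmult_left[OF sf, of S] iS by (simp add: mult.commute)
  finally show ?thesis using sq unfolding f_def S_def by (simp add: power2_eq_square)
qed

end
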